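(* Let $k\ge1$, $W^k=\,]-1/2,1/2]^k$, and let $\Lambda\subset\mathbf{R}^k$ be a lattice of covolume $1$ such that $D_c(W^k+\Lambda)\ge1/2$. Then for every $v\in\mathbf{R}^k$, \[D_c\big((W^k+\Lambda+v)\cap(W^k+\Lambda)\big)\ge2D_c(W^k+\Lambda)-1.\]
   Context: For $E\subset\mathbf{R}^k$, $D_c(E)=\lim_{R\to\infty}\operatorname{Leb}(B_R\cap E)/\operatorname{Leb}(B_R)$, where $B_R=\{x:\|x\|_\infty\le R\}$ (this limit exists for the $\Lambda$-periodic sets considered). *)

theory Defs
  imports "HOL-Analysis.Analysis"
begin

definition lattice_of :: "real^'n^'n \<Rightarrow> (real^'n) set" where
  "lattice_of B = {B *v (\<chi> i. real_of_int (z i)) | z :: 'n \<Rightarrow> int. True}"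

definition is_lattice :: "(real^'n) set \<Rightarrow> bool" where
  "is_lattice L \<longleftrightarrow> (\<exists>B. invertible B \<and> L = lattice_of B)"

definition covolume_one_lattice :: "(real^'n) set \<Rightarrow> bool" where
  "covolume_one_lattice L \<longleftrightarrow> (\<exists>B. invertible B \<and> \<bar>det B\<bar> = 1 \<and> L = lattice_of B)"

definition Wcube :: "(real^'n) set" where
  "Wcube = {x. \<forall>i. -1/2 < x$i \<and> x$i \<le> 1/2}"

definition supball :: "real \<Rightarrow> (real^'n) set" where
  "supball R = {x. \<forall>i. \<bar>x$i\<bar> \<le> R}"

definition msum :: "(real^'n) set \<Rightarrow> (real^'n) set \<Rightarrow> (real^'n) set" where
  "msum A C = {a + c | a c. a \<in> A \<and> c \<in> C}"

text \<open>Density D_c(E) = lim_{R\<rightarrow>\<infinity>} Leb(B_R \<inter> E)/Leb(B_R) (the limit exists for the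
  periodic sets considered).\<close>
definition Dc :: "(real^'n) set \<Rightarrow> real" where
  "Dc E = Lim at_top (\<lambda>R::real. measure lebesgue (supball R \<inter> E) / measure lebesgue (supball R :: (real^'n) set))"

end

theory Submission
  imports Defs "HOL-Real_Asymp.Real_Asymp"
begin

definition per :: "(real^'n) set \<Rightarrow> (real^'n) set \<Rightarrow> bool" where
  "per L A \<longleftrightarrow> (\<forall>l\<in>L. \<forall>x. (x + l \<in> A) = (x \<in> A))"

locale lat =
  fixes B Bi :: "real^'n^'n"
  assumes BBi: "B ** Bi = mat 1" and BiB: "Bi ** B = mat 1"
begin

lemma cmeas[measurable]: "(\<lambda>x. (M *v (x - u)) $ i) \<in> borel_measurable (borel :: (real^'n) measure)"
  by (intro borel_measurable_continuous_onI continuous_intros, simp add: matrix_vector_mult_diff_distrib, intro continuous_intros)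

definition Pd :: "real^'n \<Rightarrow> (real^'n) set" where
  "Pd u = {y. \<forall>i. 0 \<le> (Bi *v (y - u))$i \<and> (Bi *v (y - u))$i < 1}"

lemma Pd_borel: "Pd u \<in> sets borel"
  unfolding Pd_def by measurable

lemma B_Bi[simp]: "B *v (Bi *v x) = x" by (simp add: matrix_vector_mul_assoc BBi)
lemma Bi_B[simp]: "Bi *v (B *v x) = x" by (simp add: matrix_vector_mul_assoc BiB)

lemma Pd_bounded: "bounded (Pd u)"
proof -
  have "Pd u \<subseteq> (\<lambda>x. u + B *v x) ` cbox 0 1"
  proof
    fix y assume "y \<in> Pd u"
    then have "Bi *v (y - u) \<in> cbox 0 1"
      by (auto simp: Pd_def mem_box_cart less_imp_le)
    moreover have "y = u + B *v (Bi *v (y - u))" by simp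
    ultimately show "y \<in> (\<lambda>x. u + B *v x) ` cbox 0 1" by blast
  qed
  moreover have "bounded ((\<lambda>x. u + B *v x) ` cbox 0 1)"
    by (intro compact_imp_bounded compact_continuous_image continuous_intros) auto
  ultimately show ?thesis using bounded_subset by blast
qed

abbreviation "Lat \<equiv> lattice_of B"

definition bv :: "'n \<Rightarrow> real^'n" where "bv j = B *v axis j 1"

lemma Bi_bv[simp]: "Bi *v bv j = axis j 1" by (simp add: bv_def)

lemma Lat_add: "l \<in> Lat \<Longrightarrow> l' \<in> Lat \<Longrightarrow> l + l' \<in> Lat"
proof -
  assume "l \<in> Lat" "l' \<in> Lat"
  then obtain z z' where "l = B *v (\<chi> i. real_of_int (z i))" "l' = B *v (\<chi> i. real_of_int (z' i))"
    by (auto simp: lattice_of_def)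
  moreover have "(\<chi> i. real_of_int ((\<lambda>i. z i + z' i) i)) = (\<chi> i. real_of_int (z i)) + (\<chi> i. real_of_int (z' i))"
    by (simp add: vec_eq_iff)
  ultimately have "l + l' = B *v (\<chi> i. real_of_int ((\<lambda>i. z i + z' i) i))"
    by (simp add: matrix_vector_right_distrib)
  then show ?thesis unfolding lattice_of_def by (intro CollectI exI[where x="\<lambda>i. z i + z' i"]) simp
qed

lemma Lat_uminus: "l \<in> Lat \<Longrightarrow> - l \<in> Lat"
proof -
  assume "l \<in> Lat"
  then obtain z where "l = B *v (\<chi> i. real_of_int (z i))"
    by (auto simp: lattice_of_def)
  moreover have "(\<chi> i. real_of_int ((\<lambda>i. - z i) i)) = (-1::real) *\<^sub>R (\<chi> i. real_of_int (z i))"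
    by (simp add: vec_eq_iff)
  moreover have "B *v (- x) = - (B *v x)" for x using matrix_vector_mult_scaleR[of B "-1" x] by simp
  ultimately have "- l = B *v (\<chi> i. real_of_int ((\<lambda>i. - z i) i))"
    by (simp)
  then show ?thesis unfolding lattice_of_def by (intro CollectI exI[where x="\<lambda>i. - z i"]) simp
qed

lemma Lat_bv: "of_int m *\<^sub>R bv j \<in> Lat"
proof -
  have "(\<chi> i. real_of_int ((\<lambda>i. if i = j then m else 0) i)) = of_int m *\<^sub>R axis j 1"
    by (simp add: vec_eq_iff axis_def)
  then have "of_int m *\<^sub>R bv j = B *v (\<chi> i. real_of_int ((\<lambda>i. if i = j then m else 0) i))"
    by (simp add: bv_def matrix_vector_mult_scaleR)
  then show ?thesis by (auto simp: lattice_of_def)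
qed

lemma emeasure_transl: "X \<in> sets borel \<Longrightarrow> emeasure lborel {y. c + y \<in> X} = emeasure lborel X"
proof -
  assume X: "X \<in> sets borel"
  have "emeasure lborel X = emeasure (distr lborel borel ((+) c)) X"
    by (simp add: lborel_distr_plus)
  also have "\<dots> = emeasure lborel ((+) c -` X \<inter> space lborel)"
    using X by (intro emeasure_distr) auto
  finally show ?thesis by (simp add: vimage_def)
qed

lemma shift_lat:
  assumes A: "A \<in> sets borel" and p: "per Lat A" and l: "l \<in> Lat"
  shows "emeasure lborel (Pd (u + l) \<inter> A) = emeasure lborel (Pd u \<inter> A)"
proof -
  have "Pd (u + l) \<inter> A = {y. (-l) + y \<in> Pd u \<inter> A}"
  proof -
    have "y \<in> A \<longleftrightarrow> (-l) + y \<in> A" for y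
      using p l unfolding per_def by (metis diff_add_cancel uminus_add_conv_diff)
    then show ?thesis by (auto simp: Pd_def algebra_simps)
  qed
  moreover have "emeasure lborel {y. (-l) + y \<in> Pd u \<inter> A} = emeasure lborel (Pd u \<inter> A)"
    by (rule emeasure_transl) (use A Pd_borel in auto)
  ultimately show ?thesis by (simp only:)
qed

lemma shift_t:
  assumes A: "A \<in> sets borel" and p: "per Lat A" and t: "0 \<le> t" "t \<le> 1"
  shows "emeasure lborel (Pd (u + t *\<^sub>R bv j) \<inter> A) = emeasure lborel (Pd u \<inter> A)"
proof -
  define S where "S = {y \<in> Pd u. (Bi *v (y - u))$j < t}"
  define S' where "S' = {y. (- bv j) + y \<in> S}"
  have Sb: "S \<in> sets borel" unfolding S_def Pd_def by measurable
  have S'b: "S' \<in> sets borel" unfolding S'_def S_def Pd_def by measurable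
  have co1: "Bi *v (y - (u + t *\<^sub>R bv j)) = Bi *v (y - u) - t *\<^sub>R axis j 1" for y
    by (simp add: matrix_vector_mult_diff_distrib matrix_vector_right_distrib matrix_vector_mult_scaleR algebra_simps)
  have co2: "Bi *v (- bv j + y - u) = Bi *v (y - u) - axis j 1" for y
    by (simp add: matrix_vector_mult_diff_distrib matrix_vector_right_distrib algebra_simps)
  have eq1: "Pd (u + t *\<^sub>R bv j) = (Pd u - S) \<union> S'"
  proof (intro set_eqI)
    fix y
    define w where "w = Bi *v (y - u)"
    have h1: "y \<in> Pd (u + t *\<^sub>R bv j) \<longleftrightarrow> (\<forall>i. 0 \<le> w$i - t * (if i = j then 1 else 0) \<and> w$i - t * (if i = j then 1 else 0) < 1)"
      unfolding Pd_def co1 w_def by (simp add: axis_def)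
    have h2: "y \<in> Pd u - S \<longleftrightarrow> (\<forall>i. 0 \<le> w$i \<and> w$i < 1) \<and> t \<le> w$j"
      unfolding S_def Pd_def w_def by auto
    have h3: "y \<in> S' \<longleftrightarrow> (\<forall>i. 0 \<le> w$i - (if i = j then 1 else 0) \<and> w$i - (if i = j then 1 else 0) < 1) \<and> w$j - 1 < t"
      unfolding S'_def S_def Pd_def w_def using co2[of y] by (simp add: axis_def add.commute diff_add_eq)
    show "y \<in> Pd (u + t *\<^sub>R bv j) \<longleftrightarrow> y \<in> (Pd u - S) \<union> S'"
    proof
      assume h4: "y \<in> Pd (u + t *\<^sub>R bv j)"
      have H: "\<And>i. 0 \<le> w$i - t * (if i = j then 1 else 0) \<and> w$i - t * (if i = j then 1 else 0) < 1"
        using h1 h4 by blast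
      show "y \<in> (Pd u - S) \<union> S'"
      proof (cases "w$j < 1")
        case True
        have "\<forall>i. 0 \<le> w$i \<and> w$i < 1"
        proof
          fix i show "0 \<le> w$i \<and> w$i < 1" using H[of i] H[of j] t True by (cases "i = j") auto
        qed
        moreover have "t \<le> w$j" using H[of j] by simp
        ultimately show ?thesis using h2 by blast
      next
        case False
        have "\<forall>i. 0 \<le> w$i - (if i = j then 1 else 0) \<and> w$i - (if i = j then 1 else 0) < 1"
        proof
          fix i show "0 \<le> w$i - (if i = j then 1 else 0) \<and> w$i - (if i = j then 1 else 0) < 1"
            using H[of i] H[of j] t False by (cases "i = j") auto
        qed
        moreover have "w$j - 1 < t" using H[of j] by simp
        ultimately show ?thesis using h3 by blast
      qed
    next
      assume "y \<in> (Pd u - S) \<union> S'"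
      then show "y \<in> Pd (u + t *\<^sub>R bv j)"
      proof
        assume "y \<in> Pd u - S"
        then have H: "\<And>i. 0 \<le> w$i \<and> w$i < 1" "t \<le> w$j" using h2 by auto
        have "0 \<le> w$i - t * (if i = j then 1 else 0) \<and> w$i - t * (if i = j then 1 else 0) < 1" for i
          using H(1)[of i] H(2) t by (cases "i = j") auto
        then show ?thesis using h1 by blast
      next
        assume "y \<in> S'"
        then have H: "\<And>i. 0 \<le> w$i - (if i = j then 1 else 0) \<and> w$i - (if i = j then 1 else 0) < 1" "w$j - 1 < t"
          using h3 by auto
        have "0 \<le> w$i - t * (if i = j then 1 else 0) \<and> w$i - t * (if i = j then 1 else 0) < 1" for i
          using H(1)[of i] H(2) t by (cases "i = j") auto
        then show ?thesis using h1 by blast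
      qed
    qed
  qed
  have disj: "(Pd u - S) \<inter> S' = {}"
  proof -
    have "y \<in> S' \<Longrightarrow> 1 \<le> (Bi *v (y - u))$j" for y
      unfolding S'_def S_def Pd_def using co2[of y] by (auto simp: add.commute diff_add_eq dest!: spec[of _ j])
    moreover have "y \<in> Pd u \<Longrightarrow> (Bi *v (y - u))$j < 1" for y unfolding Pd_def by auto
    ultimately show ?thesis by (meson DiffD1 disjoint_iff not_le)
  qed
  have S'A: "S' \<inter> A = {y. (- bv j) + y \<in> S \<inter> A}"
  proof -
    have "bv j \<in> Lat" using Lat_bv[of 1 j] by simp
    then have "y \<in> A \<longleftrightarrow> (- bv j) + y \<in> A" for y
      using p unfolding per_def by (metis diff_add_cancel uminus_add_conv_diff)
    then show ?thesis unfolding S'_def by auto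
  qed
  have "emeasure lborel (Pd (u + t *\<^sub>R bv j) \<inter> A) = emeasure lborel ((Pd u - S) \<inter> A) + emeasure lborel (S' \<inter> A)"
    unfolding eq1 Int_Un_distrib2 using disj A Sb S'b Pd_borel
    by (intro plus_emeasure[symmetric]) auto
  also have "emeasure lborel (S' \<inter> A) = emeasure lborel (S \<inter> A)"
    unfolding S'A by (rule emeasure_transl) (use A Sb in auto)
  also have "emeasure lborel ((Pd u - S) \<inter> A) + emeasure lborel (S \<inter> A) = emeasure lborel (Pd u \<inter> A)"
  proof -
    have "Pd u \<inter> A = ((Pd u - S) \<inter> A) \<union> (S \<inter> A)" unfolding S_def by auto
    moreover have "emeasure lborel ((Pd u - S) \<inter> A) + emeasure lborel (S \<inter> A) = emeasure lborel (((Pd u - S) \<inter> A) \<union> (S \<inter> A))"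
      using A Sb Pd_borel by (intro plus_emeasure) auto
    ultimately show ?thesis by simp
  qed
  finally show ?thesis .
qed

lemma shift_s:
  assumes A: "A \<in> sets borel" and p: "per Lat A"
  shows "emeasure lborel (Pd (u + s *\<^sub>R bv j) \<inter> A) = emeasure lborel (Pd u \<inter> A)"
proof -
  have "u + s *\<^sub>R bv j = (u + frac s *\<^sub>R bv j) + of_int (floor s) *\<^sub>R bv j"
    by (simp add: frac_def algebra_simps)
  then have "emeasure lborel (Pd (u + s *\<^sub>R bv j) \<inter> A) = emeasure lborel (Pd (u + frac s *\<^sub>R bv j) \<inter> A)"
    using shift_lat[OF A p Lat_bv, of "u + frac s *\<^sub>R bv j" "floor s" j] by (simp only:)
  also have "\<dots> = emeasure lborel (Pd u \<inter> A)"
    using shift_t[OF A p, of "frac s"] frac_ge_0 frac_lt_1 less_imp_le by blast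
  finally show ?thesis .
qed

lemma mv_sum: "B *v (\<Sum>j\<in>I. f j) = (\<Sum>j\<in>I. B *v f j)"
  by (induction I rule: infinite_finite_induct) (auto simp: matrix_vector_right_distrib)

lemma B_expand: "B *v x = (\<Sum>j\<in>UNIV. x$j *\<^sub>R bv j)"
proof -
  have "B *v x = B *v (\<Sum>j\<in>UNIV. x$j *\<^sub>R axis j 1)"
    using basis_expansion[of x] by (simp add: scalar_mult_eq_scaleR)
  also have "\<dots> = (\<Sum>j\<in>UNIV. x$j *\<^sub>R bv j)"
    by (simp add: mv_sum matrix_vector_mult_scaleR bv_def)
  finally show ?thesis .
qed

lemma invariance:
  assumes A: "A \<in> sets borel" and p: "per Lat A"
  shows "emeasure lborel (Pd u \<inter> A) = emeasure lborel (Pd 0 \<inter> A)"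
proof -
  have fin: "finite I \<Longrightarrow> emeasure lborel (Pd (\<Sum>j\<in>I. x$j *\<^sub>R bv j) \<inter> A) = emeasure lborel (Pd 0 \<inter> A)" for I x
  proof (induction I rule: finite_induct)
    case empty then show ?case by simp
  next
    case (insert j I)
    then show ?case using shift_s[OF A p, of "\<Sum>j\<in>I. x$j *\<^sub>R bv j" "x$j" j]
      by (simp add: add.commute)
  qed
  have "u = (\<Sum>j\<in>UNIV. (Bi *v u)$j *\<^sub>R bv j)"
    using B_expand[of "Bi *v u"] by simp
  then show ?thesis using fin[of UNIV "Bi *v u"] by simp
qed

lemma supball_borel[measurable]: "supball R \<in> sets (borel :: (real^'n) measure)"
  unfolding supball_def by measurable

lemma fub:
  assumes A: "A \<in> sets borel" and p: "per Lat A"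
    and d: "Pd 0 \<subseteq> supball d"
  shows "emeasure lborel (supball (R - d) \<inter> A) * emeasure lborel (Pd 0)
           \<le> emeasure lborel (Pd 0 \<inter> A) * emeasure lborel (supball R :: (real^'n) set)"
    and "emeasure lborel (Pd 0 \<inter> A) * emeasure lborel (supball R :: (real^'n) set)
           \<le> emeasure lborel (supball (R + d) \<inter> A) * emeasure lborel (Pd 0)"
proof -
  define P where "P = Pd 0"
  have Pb: "P \<in> sets borel" unfolding P_def by (rule Pd_borel)
  define SS where "SS = {p::(real^'n) \<times> (real^'n). fst p \<in> P \<and> snd p \<in> supball R \<and> snd p + fst p \<in> A}"
  have SSm: "SS \<in> sets (lborel \<Otimes>\<^sub>M lborel)"
  proof -
    have "Measurable.pred (borel \<Otimes>\<^sub>M borel) (\<lambda>p::(real^'n) \<times> (real^'n). fst p \<in> P \<and> snd p \<in> supball R \<and> snd p + fst p \<in> A)"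
      using Pb A by measurable
    then show ?thesis unfolding SS_def Measurable.pred_def by (simp add: space_pair_measure)
  qed
  define F where "F y = emeasure lborel {z. z \<in> supball R \<and> z + y \<in> A}" for y
  have e1: "emeasure (lborel \<Otimes>\<^sub>M lborel) SS = (\<integral>\<^sup>+y. F y * indicator P y \<partial>lborel)"
    unfolding lborel.emeasure_pair_measure_alt[OF SSm]
    by (intro nn_integral_cong) (auto simp: SS_def F_def indicator_def vimage_def)
  have e2: "emeasure (lborel \<Otimes>\<^sub>M lborel) SS = emeasure lborel (Pd 0 \<inter> A) * emeasure lborel (supball R :: (real^'n) set)"
  proof -
    have "emeasure (lborel \<Otimes>\<^sub>M lborel) SS = (\<integral>\<^sup>+z. emeasure lborel (Pd 0 \<inter> A) * indicator (supball R :: (real^'n) set) z \<partial>lborel)"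
    proof -
      have "emeasure (lborel \<Otimes>\<^sub>M lborel) SS = (\<integral>\<^sup>+z. emeasure lborel ((\<lambda>y. (y, z)) -` SS) \<partial>lborel)"
        by (rule lborel_pair.emeasure_pair_measure_alt2[OF SSm])
      moreover have "emeasure lborel ((\<lambda>y. (y, z)) -` SS) = emeasure lborel (Pd 0 \<inter> A) * indicator (supball R :: (real^'n) set) z" for z
      proof -
      show "emeasure lborel ((\<lambda>y. (y, z)) -` SS) = emeasure lborel (Pd 0 \<inter> A) * indicator (supball R :: (real^'n) set) z"
      proof (cases "z \<in> supball R")
        case True
        have "(\<lambda>y. (y, z)) -` SS = {y. z + y \<in> Pd z \<inter> A}"
          using True by (auto simp: SS_def P_def Pd_def add.commute)
        then have "emeasure lborel ((\<lambda>y. (y, z)) -` SS) = emeasure lborel (Pd z \<inter> A)"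
          using emeasure_transl[of "Pd z \<inter> A" z] A Pd_borel by simp
        then show ?thesis using True invariance[OF A p, of z] by simp
      next
        case False
        then have "(\<lambda>y. (y, z)) -` SS = {}" by (auto simp: SS_def)
        then show ?thesis using False by simp
      qed
      qed
      ultimately show ?thesis by simp
    qed
    also have "\<dots> = emeasure lborel (Pd 0 \<inter> A) * emeasure lborel (supball R :: (real^'n) set)"
      by (rule nn_integral_cmult_indicator) simp
    finally show ?thesis .
  qed
  have Fb: "emeasure lborel (supball (R - d) \<inter> A) \<le> F y \<and> F y \<le> emeasure lborel (supball (R + d) \<inter> A)"
    if y: "y \<in> P" for y
  proof -
    define X where "X = {w. w - y \<in> supball R} \<inter> A"
    have Xb: "X \<in> sets borel" unfolding X_def using A by measurable
    have "F y = emeasure lborel {z. y + z \<in> X}"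
      unfolding F_def X_def by (rule arg_cong[where f="emeasure lborel"]) (auto simp: add.commute)
    also have "\<dots> = emeasure lborel X" by (rule emeasure_transl[OF Xb])
    finally have FX: "F y = emeasure lborel X" .
    have yd: "\<bar>y$i\<bar> \<le> d" for i using d y unfolding P_def supball_def by auto
    have "supball (R - d) \<inter> A \<subseteq> X"
    proof
      fix w assume "w \<in> supball (R - d) \<inter> A"
      then have "\<bar>w$i\<bar> \<le> R - d" "w \<in> A" for i by (auto simp: supball_def)
      then have h: "\<bar>w$i\<bar> \<le> R - d" for i by simp
      have "\<bar>(w - y)$i\<bar> \<le> R" for i using h[of i] yd[of i] by simp
      then show "w \<in> X" using \<open>w \<in> supball (R - d) \<inter> A\<close> by (auto simp: X_def supball_def)
    qed
    moreover have "X \<subseteq> supball (R + d) \<inter> A"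
    proof
      fix w assume "w \<in> X"
      then have "\<bar>(w - y)$i\<bar> \<le> R" "w \<in> A" for i by (auto simp: supball_def X_def)
      then have h: "\<bar>w$i - y$i\<bar> \<le> R" for i by simp
      have "\<bar>w$i\<bar> \<le> R + d" for i using h[of i] yd[of i] by linarith
      then show "w \<in> supball (R + d) \<inter> A" using \<open>w \<in> X\<close> by (auto simp: X_def supball_def)
    qed
    ultimately show ?thesis unfolding FX using Xb A by (auto intro!: emeasure_mono)
  qed
  have "(\<integral>\<^sup>+y. emeasure lborel (supball (R - d) \<inter> A) * indicator P y \<partial>lborel) \<le> (\<integral>\<^sup>+y. F y * indicator P y \<partial>lborel)"
    using Fb by (intro nn_integral_mono) (auto simp: indicator_def)
  moreover have "(\<integral>\<^sup>+y. F y * indicator P y \<partial>lborel) \<le> (\<integral>\<^sup>+y. emeasure lborel (supball (R + d) \<inter> A) * indicator P y \<partial>lborel)"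
    using Fb by (intro nn_integral_mono) (auto simp: indicator_def)
  ultimately show "emeasure lborel (supball (R - d) \<inter> A) * emeasure lborel (Pd 0)
           \<le> emeasure lborel (Pd 0 \<inter> A) * emeasure lborel (supball R :: (real^'n) set)"
    and "emeasure lborel (Pd 0 \<inter> A) * emeasure lborel (supball R :: (real^'n) set)
           \<le> emeasure lborel (supball (R + d) \<inter> A) * emeasure lborel (Pd 0)"
    using e1 e2 Pb by (simp_all add: nn_integral_cmult_indicator P_def)
qed

end

lemma supball_cbox: "supball R = cbox (- (\<chi> i. R)) (\<chi> i. R :: real^'n)"
  by (auto simp: supball_def mem_box_cart abs_le_iff minus_le_iff)

lemma vol_supball: "R \<ge> 0 \<Longrightarrow> measure lborel (supball R :: (real^'n) set) = (2 * R) ^ CARD('n)"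
proof -
  assume R: "R \<ge> 0"
  have "measure lborel (supball R :: (real^'n) set) = (\<Prod>b\<in>Basis. ((\<chi> i. R) - (- (\<chi> i. R)) :: real^'n) \<bullet> b)"
    unfolding supball_cbox by (rule measure_lborel_cbox) (use R in \<open>auto simp: Basis_vec_def inner_axis\<close>)
  also have "\<dots> = (\<Prod>b\<in>(Basis :: (real^'n) set). 2 * R)"
    by (intro prod.cong) (auto simp: Basis_vec_def inner_axis)
  also have "\<dots> = (2 * R) ^ CARD('n)" by simp
  finally show ?thesis .
qed

context lat begin

lemma Lat_countable: "countable Lat"
proof -
  have "Lat = range (\<lambda>z::'n \<Rightarrow> int. B *v (\<chi> i. real_of_int (z i)))"
    unfolding lattice_of_def by auto
  then show ?thesis by simp
qed

lemma Pd_fin: "emeasure lborel (Pd u) \<noteq> top"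
  using emeasure_bounded_finite[OF Pd_bounded, of u] by (simp add: less_top)

lemma Pd_pos: "0 < measure lborel (Pd 0)"
proof (rule ccontr)
  assume "\<not> 0 < measure lborel (Pd 0)"
  then have "measure lborel (Pd 0) = 0" using measure_nonneg[of lborel "Pd 0"] by linarith
  then have e0: "emeasure lborel (Pd 0) = 0" using emeasure_eq_ennreal_measure[OF Pd_fin] by simp
  have perU: "per Lat UNIV" unfolding per_def by simp
  have "Pd l \<in> null_sets lborel" if "l \<in> Lat" for l
  proof -
    have "emeasure lborel (Pd (0 + l) \<inter> UNIV) = emeasure lborel (Pd 0 \<inter> UNIV)"
      by (rule shift_lat[OF _ perU that]) simp
    then have "emeasure lborel (Pd l) = 0" using e0 by simp
    then show ?thesis using Pd_borel by (auto intro: null_setsI)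
  qed
  then have "(\<Union>l\<in>Lat. Pd l) \<in> null_sets lborel"
    by (intro null_sets_UN' Lat_countable)
  moreover have "(\<Union>l\<in>Lat. Pd l) = UNIV"
  proof -
    have "y \<in> Pd (B *v (\<chi> i. real_of_int \<lfloor>(Bi *v y)$i\<rfloor>))" for y
      by (simp add: Pd_def matrix_vector_mult_diff_distrib matrix_vector_mul_assoc BiB) linarith
    moreover have "B *v (\<chi> i. real_of_int \<lfloor>(Bi *v y)$i\<rfloor>) \<in> Lat" for y
      unfolding lattice_of_def by (intro CollectI exI[where x="\<lambda>i. \<lfloor>(Bi *v y)$i\<rfloor>"]) simp
    ultimately show ?thesis by blast
  qed
  ultimately show False by (simp add: null_sets_def)
qed


lemma supball_fin: "emeasure lborel (supball R \<inter> X :: (real^'n) set) \<noteq> top"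
proof -
  have "bounded (supball R \<inter> X :: (real^'n) set)" unfolding supball_cbox by (intro bounded_Int) auto
  then show ?thesis using emeasure_bounded_finite by (simp add: less_top)
qed

lemma dlim:
  assumes A: "A \<in> sets borel" and p: "per Lat A"
  shows "((\<lambda>R. measure lborel (supball R \<inter> A) / measure lborel (supball R :: (real^'n) set))
          \<longlongrightarrow> measure lborel (Pd 0 \<inter> A) / measure lborel (Pd 0)) at_top"
proof -
  obtain d where d0: "d > 0" and dn: "\<forall>x\<in>Pd 0. norm x \<le> d"
    using Pd_bounded[of 0] unfolding bounded_pos by blast
  have d: "Pd 0 \<subseteq> supball d"
    using dn component_le_norm_cart order_trans unfolding supball_def by blast
  define pp where "pp = measure lborel (Pd 0)"
  define c where "c = measure lborel (Pd 0 \<inter> A)"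
  define a where "a R = measure lborel (supball R \<inter> A)" for R
  define V where "V R = measure lborel (supball R :: (real^'n) set)" for R
  have pp: "pp > 0" unfolding pp_def by (rule Pd_pos)
  have c0: "c \<ge> 0" unfolding c_def by simp
  have ePd: "emeasure lborel (Pd 0) = ennreal pp"
    unfolding pp_def by (rule emeasure_eq_ennreal_measure[OF Pd_fin])
  have ePdA: "emeasure lborel (Pd 0 \<inter> A) = ennreal c"
  proof -
    have "emeasure lborel (Pd 0 \<inter> A) \<le> emeasure lborel (Pd 0)"
      using Pd_borel by (intro emeasure_mono) auto
    then have "emeasure lborel (Pd 0 \<inter> A) \<noteq> top" using Pd_fin[of 0] by (auto simp: top_unique)
    then show ?thesis unfolding c_def by (rule emeasure_eq_ennreal_measure)
  qed
  have ea: "emeasure lborel (supball R \<inter> A) = ennreal (a R)" for R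
    unfolding a_def by (rule emeasure_eq_ennreal_measure[OF supball_fin])
  have eV: "emeasure lborel (supball R :: (real^'n) set) = ennreal (V R)" for R
    unfolding V_def using emeasure_eq_ennreal_measure[OF supball_fin[of R UNIV]] by simp
  have ann: "a R \<ge> 0" for R unfolding a_def by simp
  have Vnn: "V R \<ge> 0" for R unfolding V_def by simp
  have i1: "a (R - d) * pp \<le> c * V R" for R
  proof -
    have "ennreal (a (R - d) * pp) \<le> ennreal (c * V R)"
      using fub(1)[OF A p d, of R] unfolding ea eV ePd ePdA
      by (simp only: ennreal_mult[OF ann[of "R - d"] less_imp_le[OF pp]] ennreal_mult[OF c0 Vnn[of R]])
    then show ?thesis using c0 Vnn[of R] by (simp add: ennreal_le_iff)
  qed
  have i2: "c * V R \<le> a (R + d) * pp" for R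
  proof -
    have "ennreal (c * V R) \<le> ennreal (a (R + d) * pp)"
      using fub(2)[OF A p d, of R] unfolding ea eV ePd ePdA
      by (simp only: ennreal_mult[OF ann[of "R + d"] less_imp_le[OF pp]] ennreal_mult[OF c0 Vnn[of R]])
    then show ?thesis using ann[of "R + d"] pp by (simp add: ennreal_le_iff)
  qed
  define k where "k = CARD('n)"
  have VR: "R \<ge> 0 \<Longrightarrow> V R = (2 * R) ^ k" for R unfolding V_def k_def by (rule vol_supball)
  have up: "a R / V R \<le> (c / pp) * ((R + d) / R) ^ k" if R: "R > d" for R
  proof -
    have "a R * pp \<le> c * V (R + d)" using i1[of "R + d"] by simp
    moreover have "V (R + d) / V R = ((R + d) / R) ^ k"
    proof -
      have "V (R + d) / V R = (2 * (R + d)) ^ k / (2 * R) ^ k" using R d0 by (simp add: VR)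
      also have "\<dots> = ((2 * (R + d)) / (2 * R)) ^ k" by (rule power_divide[symmetric])
      also have "(2 * (R + d)) / (2 * R) = (R + d) / R" by (rule mult_divide_mult_cancel_left) simp
      finally show ?thesis .
    qed
    moreover have "V R > 0" using R d0 by (simp add: VR)
    ultimately show ?thesis using pp
      by (smt (verit, ccfv_SIG) divide_right_mono mult.commute pos_divide_le_eq times_divide_eq_left times_divide_eq_right)
  qed
  have lo: "(c / pp) * ((R - d) / R) ^ k \<le> a R / V R" if R: "R > d" for R
  proof -
    have "c * V (R - d) \<le> a R * pp" using i2[of "R - d"] by simp
    moreover have "V (R - d) / V R = ((R - d) / R) ^ k"
    proof -
      have "V (R - d) / V R = (2 * (R - d)) ^ k / (2 * R) ^ k" using R d0 by (simp add: VR)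
      also have "\<dots> = ((2 * (R - d)) / (2 * R)) ^ k" by (rule power_divide[symmetric])
      also have "(2 * (R - d)) / (2 * R) = (R - d) / R" by (rule mult_divide_mult_cancel_left) simp
      finally show ?thesis .
    qed
    moreover have "V R > 0" using R d0 by (simp add: VR)
    ultimately show ?thesis using pp
      by (smt (verit, ccfv_SIG) divide_right_mono mult.commute pos_divide_le_eq times_divide_eq_left times_divide_eq_right)
  qed
  have l1: "((\<lambda>R. (R + d) / R) \<longlongrightarrow> 1) at_top" by real_asymp
  have l2: "((\<lambda>R. (R - d) / R) \<longlongrightarrow> 1) at_top" by real_asymp
  have "((\<lambda>R. (c / pp) * ((R + d) / R) ^ k) \<longlongrightarrow> (c / pp) * 1 ^ k) at_top"
    by (intro tendsto_intros l1)
  then have L1: "((\<lambda>R. (c / pp) * ((R + d) / R) ^ k) \<longlongrightarrow> c / pp) at_top" by simp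
  have "((\<lambda>R. (c / pp) * ((R - d) / R) ^ k) \<longlongrightarrow> (c / pp) * 1 ^ k) at_top"
    by (intro tendsto_intros l2)
  then have L2: "((\<lambda>R. (c / pp) * ((R - d) / R) ^ k) \<longlongrightarrow> c / pp) at_top" by simp
  have ev: "eventually (\<lambda>R. R > d) at_top" by (rule eventually_gt_at_top)
  have "((\<lambda>R. a R / V R) \<longlongrightarrow> c / pp) at_top"
  proof (rule tendsto_sandwich[OF _ _ L2 L1])
    show "\<forall>\<^sub>F R in at_top. c / pp * ((R - d) / R) ^ k \<le> a R / V R"
      using ev by (rule eventually_mono) (rule lo)
    show "\<forall>\<^sub>F R in at_top. a R / V R \<le> c / pp * ((R + d) / R) ^ k"
      using ev by (rule eventually_mono) (rule up)
  qed
  then show ?thesis unfolding a_def V_def c_def pp_def .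
qed


lemma Dc_eq:
  assumes A: "A \<in> sets borel" and p: "per Lat A"
  shows "Dc A = measure lborel (Pd 0 \<inter> A) / measure lborel (Pd 0)"
proof -
  have "(\<lambda>R. measure lebesgue (supball R \<inter> A) / measure lebesgue (supball R :: (real^'n) set))
        = (\<lambda>R. measure lborel (supball R \<inter> A) / measure lborel (supball R :: (real^'n) set))"
    using A by (intro ext) simp
  then show ?thesis unfolding Dc_def using dlim[OF A p] by (simp add: tendsto_Lim)
qed

lemma Pd_sub_fm: "X \<in> sets borel \<Longrightarrow> Pd 0 \<inter> X \<in> fmeasurable lborel"
proof -
  assume X: "X \<in> sets borel"
  have "emeasure lborel (Pd 0 \<inter> X) \<le> emeasure lborel (Pd 0)"
    using Pd_borel X by (intro emeasure_mono) auto
  then have "emeasure lborel (Pd 0 \<inter> X) < top" using Pd_fin[of 0] by (meson le_less_trans less_top)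
  then show ?thesis using X Pd_borel by (intro fmeasurableI) (auto simp: infinity_ennreal_def)
qed

end

theorem lemma2p12:
  fixes L :: "(real^'n) set" and v :: "real^'n"
  assumes "covolume_one_lattice L"
    and "Dc (msum Wcube L) \<ge> 1/2"
  shows "Dc ((\<lambda>x. x + v) ` msum Wcube L \<inter> msum Wcube L) \<ge> 2 * Dc (msum Wcube L) - 1"
proof -
  obtain B where Binv: "invertible B" and LB: "L = lattice_of B"
    using assms(1) unfolding covolume_one_lattice_def by blast
  obtain Bi where "B ** Bi = mat 1" "Bi ** B = mat 1" using Binv unfolding invertible_def by blast
  then interpret lat B Bi by unfold_locales
  define E where "E = msum Wcube L"
  define E' where "E' = (\<lambda>x. x + v) ` E"
  have Wb[measurable]: "Wcube \<in> sets (borel :: (real^'n) measure)" unfolding Wcube_def by measurable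
  have Eeq: "E = (\<Union>l\<in>L. {x. x - l \<in> Wcube})"
  proof (intro set_eqI iffI)
    fix x assume "x \<in> E"
    then obtain a c where "x = a + c" "a \<in> Wcube" "c \<in> L" unfolding E_def msum_def by auto
    then show "x \<in> (\<Union>l\<in>L. {x. x - l \<in> Wcube})" by (auto intro!: bexI[of _ c])
  next
    fix x assume "x \<in> (\<Union>l\<in>L. {x. x - l \<in> Wcube})"
    then obtain l where "l \<in> L" "x - l \<in> Wcube" by auto
    moreover have "x = (x - l) + l" by simp
    ultimately show "x \<in> E" unfolding E_def msum_def by blast
  qed
  have Eb[measurable]: "E \<in> sets borel"
    unfolding Eeq
  proof (rule sets.countable_UN'')
    show "countable L" using Lat_countable LB by simp
    fix l
    have m: "(\<lambda>x::real^'n. x - l) \<in> borel_measurable borel"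
      by (intro borel_measurable_continuous_onI continuous_intros)
    show "{x. x - l \<in> Wcube} \<in> sets borel"
      using measurable_sets[OF m Wb] by (simp add: vimage_def)
  qed
  have Ep: "per Lat E"
    unfolding per_def
  proof (intro ballI allI)
    fix l x assume l: "l \<in> Lat"
    show "(x + l \<in> E) = (x \<in> E)"
    proof
      assume "x + l \<in> E"
      then obtain l' where "l' \<in> L" "x + l - l' \<in> Wcube" unfolding Eeq by auto
      moreover have "l' + (- l) \<in> L" using LB Lat_add[OF _ Lat_uminus[OF l]] \<open>l' \<in> L\<close> by blast
      ultimately show "x \<in> E" unfolding Eeq by (auto intro!: bexI[of _ "l' + (- l)"] simp: algebra_simps)
    next
      assume "x \<in> E"
      then obtain l' where "l' \<in> L" "x - l' \<in> Wcube" unfolding Eeq by auto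
      moreover have "l' + l \<in> L" using LB Lat_add l \<open>l' \<in> L\<close> by simp
      ultimately show "x + l \<in> E" unfolding Eeq by (auto intro!: bexI[of _ "l' + l"] simp: algebra_simps)
    qed
  qed
  have E'eq: "E' = {x. (- v) + x \<in> E}"
  proof (intro set_eqI iffI)
    fix x assume "x \<in> E'" then show "x \<in> {x. (- v) + x \<in> E}" unfolding E'_def by auto
  next
    fix x assume "x \<in> {x. (- v) + x \<in> E}"
    moreover have "x = ((- v) + x) + v" by simp
    ultimately show "x \<in> E'" unfolding E'_def by blast
  qed
  have E'b: "E' \<in> sets borel" unfolding E'eq using Eb by measurable
  have E'p: "per Lat E'"
    using Ep unfolding per_def E'eq by (metis (no_types, lifting) add.assoc mem_Collect_eq)
  have Xb: "E' \<inter> E \<in> sets borel" using Eb E'b by auto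
  have Xp: "per Lat (E' \<inter> E)" using Ep E'p unfolding per_def by auto
  define pp where "pp = measure lborel (Pd 0)"
  have pp: "pp > 0" unfolding pp_def by (rule Pd_pos)
  have DE: "Dc E = measure lborel (Pd 0 \<inter> E) / pp" unfolding pp_def by (rule Dc_eq[OF Eb Ep])
  have DX: "Dc (E' \<inter> E) = measure lborel (Pd 0 \<inter> (E' \<inter> E)) / pp" unfolding pp_def by (rule Dc_eq[OF Xb Xp])
  have same: "measure lborel (Pd 0 \<inter> E') = measure lborel (Pd 0 \<inter> E)"
  proof -
    have "Pd 0 \<inter> E' = {y. (- v) + y \<in> Pd (- v) \<inter> E}"
      unfolding E'eq Pd_def by auto
    then have "emeasure lborel (Pd 0 \<inter> E') = emeasure lborel (Pd (- v) \<inter> E)"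
      using emeasure_transl[of "Pd (- v) \<inter> E" "- v"] Eb Pd_borel by simp
    also have "\<dots> = emeasure lborel (Pd 0 \<inter> E)" by (rule invariance[OF Eb Ep])
    finally show ?thesis unfolding measure_def by simp
  qed
  have un: "measure lborel ((Pd 0 \<inter> E') \<union> (Pd 0 \<inter> E)) = measure lborel (Pd 0 \<inter> E') + measure lborel (Pd 0 \<inter> E) - measure lborel ((Pd 0 \<inter> E') \<inter> (Pd 0 \<inter> E))"
    by (rule measure_Un3[OF Pd_sub_fm[OF E'b] Pd_sub_fm[OF Eb]])
  have "measure lborel ((Pd 0 \<inter> E') \<union> (Pd 0 \<inter> E)) \<le> pp"
    unfolding pp_def using Pd_sub_fm[of UNIV] E'b Eb
    by (intro measure_mono_fmeasurable) auto
  moreover have ie: "(Pd 0 \<inter> E') \<inter> (Pd 0 \<inter> E) = Pd 0 \<inter> (E' \<inter> E)" by auto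
  ultimately have ineq: "measure lborel (Pd 0 \<inter> (E' \<inter> E)) \<ge> 2 * measure lborel (Pd 0 \<inter> E) - pp"
    using un[unfolded ie] same by linarith
  have "measure lborel (Pd 0 \<inter> (E' \<inter> E)) / pp \<ge> 2 * (measure lborel (Pd 0 \<inter> E) / pp) - 1"
  proof -
    have "2 * (measure lborel (Pd 0 \<inter> E) / pp) - 1 = (2 * measure lborel (Pd 0 \<inter> E) - pp) / pp"
      using pp by (simp add: diff_divide_distrib)
    then show ?thesis using divide_right_mono[OF ineq less_imp_le[OF pp]] by simp
  qed
  then show ?thesis unfolding E'_def[symmetric] E_def[symmetric] using DE DX by simp
qed


end
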